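(* In the negative-fill variable-processor cup game against a greedy emptier, suppose that at the beginning of some round all fills are (possibly negative) half-integers (integer multiples of $1/2$). Let $k\in\mathbb Z$ and $q\in\mathbb N$, $q\ge1$, and suppose at least $2q$ cups have fill exactly $k/2$. Then the filler can ensure that at the end of the round exactly $q$ of the cups of fill $k/2$ have fill $(k+1)/2$, exactly $q$ of the cups of fill $k/2$ have fill $(k-1)/2$, and all other cups are unchanged.
   Context: Negative-fill variable-processor cup game on $n$ cups: real fills; each round the filler chooses an integer $1\le p\le n$ and reals $a_i\in[0,1]$ with $\sum a_i=p$ and adds $a_i$ to cup $i$; then the emptier chooses $p$ distinct cups and subtracts exactly $1$ from each. The greedy emptier subtracts from the $p$ fullest cups after the filler's move (ties broken arbitrarily). *)

theory Defs
  imports Complex_Main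
begin

text \<open>Cups are indexed by {..<n}; a configuration is a function nat => real
  (values at indices >= n are irrelevant).\<close>

definition valid_filler_move :: "nat \<Rightarrow> nat \<Rightarrow> (nat \<Rightarrow> real) \<Rightarrow> bool" where
  "valid_filler_move n p a \<longleftrightarrow> 1 \<le> p \<and> p \<le> n \<and>
     (\<forall>i<n. 0 \<le> a i \<and> a i \<le> 1) \<and> (\<Sum>i<n. a i) = real p"

definition after_fill :: "(nat \<Rightarrow> real) \<Rightarrow> (nat \<Rightarrow> real) \<Rightarrow> nat \<Rightarrow> real" where
  "after_fill x a = (\<lambda>i. x i + a i)"

definition greedy_choice :: "nat \<Rightarrow> (nat \<Rightarrow> real) \<Rightarrow> nat \<Rightarrow> nat set \<Rightarrow> bool" where
  "greedy_choice n y p S \<longleftrightarrow> S \<subseteq> {..<n} \<and> card S = p \<and>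
     (\<forall>i\<in>S. \<forall>j\<in>{..<n} - S. y j \<le> y i)"

definition empty_cups :: "(nat \<Rightarrow> real) \<Rightarrow> nat set \<Rightarrow> nat \<Rightarrow> real" where
  "empty_cups y S = (\<lambda>i. if i \<in> S then y i - 1 else y i)"

end

theory Submission
  imports Defs
begin

theorem lemma5p3:
  fixes n :: nat and x :: "nat \<Rightarrow> real" and k :: int and q :: nat
  assumes half_int: "\<forall>i<n. \<exists>m::int. x i = real_of_int m / 2"
    and q_pos: "1 \<le> q"
    and many: "2 * q \<le> card {i. i < n \<and> x i = real_of_int k / 2}"
  shows "\<exists>p a. valid_filler_move n p a \<and>
           (\<forall>S. greedy_choice n (after_fill x a) p S \<longrightarrow>
              (let z = empty_cups (after_fill x a) S in
               \<exists>A B. A \<subseteq> {i. i < n \<and> x i = real_of_int k / 2} \<and>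
                     B \<subseteq> {i. i < n \<and> x i = real_of_int k / 2} \<and>
                     A \<inter> B = {} \<and> card A = q \<and> card B = q \<and>
                     (\<forall>i\<in>A. z i = real_of_int (k + 1) / 2) \<and>
                     (\<forall>i\<in>B. z i = real_of_int (k - 1) / 2) \<and>
                     (\<forall>i<n. i \<notin> A \<union> B \<longrightarrow> z i = x i)))"
proof -
  define C where "C = {i. i < n \<and> x i = real_of_int k / 2}"
  define H where "H = {i. i < n \<and> x i > real_of_int k / 2}"
  have finC: "finite C" unfolding C_def by auto
  have finH: "finite H" unfolding H_def by auto
  obtain D where DC: "D \<subseteq> C" and cD: "card D = 2 * q"
    using obtain_subset_with_card_n[of "2*q" C] many C_def by auto
  have finD: "finite D" using DC finC finite_subset by blast
  have HD: "H \<inter> D = {}" using DC unfolding C_def H_def by auto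
  have Hn: "H \<subseteq> {..<n}" unfolding H_def by auto
  have Dn: "D \<subseteq> {..<n}" using DC unfolding C_def by auto
  have HCn: "H \<union> C \<subseteq> {..<n}" "H \<inter> C = {}" unfolding C_def H_def by auto
  have "card (H \<union> C) \<le> n" using HCn card_mono[OF _ HCn(1)] by auto
  hence cHC: "card H + card C \<le> n" using card_Un_disjoint[OF finH finC HCn(2)] by simp
  define a where "a = (\<lambda>i. if i \<in> H then (1::real) else if i \<in> D then 1/2 else 0)"
  define p where "p = card H + q"
  define y where "y = after_fill x a"
  have sumH: "(\<Sum>i\<in>H. a i) = real (card H)" unfolding a_def by simp
  have sumD: "(\<Sum>i\<in>D. a i) = real q"
  proof -
    have "(\<Sum>i\<in>D. a i) = (\<Sum>i\<in>D. 1/2)" using HD unfolding a_def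
      by (intro sum.cong) auto
    also have "\<dots> = real q" using cD by simp
    finally show ?thesis .
  qed
  have sumR: "(\<Sum>i\<in>{..<n} - (H \<union> D). a i) = 0" unfolding a_def by (intro sum.neutral) auto
  have "(\<Sum>i<n. a i) = (\<Sum>i\<in>H \<union> D. a i) + (\<Sum>i\<in>{..<n} - (H \<union> D). a i)"
    using sum.subset_diff[of "H \<union> D" "{..<n}" a] Hn Dn by simp
  also have "\<dots> = real p" using sum.union_disjoint[OF finH finD HD, of a] sumH sumD sumR p_def by simp
  finally have sumA: "(\<Sum>i<n. a i) = real p" .
  have valid: "valid_filler_move n p a"
    unfolding valid_filler_move_def using q_pos cHC many cD C_def sumA p_def
    by (auto simp: a_def)
  have yH: "i \<in> H \<Longrightarrow> y i = x i + 1" for i unfolding y_def after_fill_def a_def by simp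
  have yD: "i \<in> D \<Longrightarrow> y i = real_of_int k / 2 + 1/2" for i
    using HD DC unfolding y_def after_fill_def a_def C_def by auto
  have yR: "i < n \<Longrightarrow> i \<notin> H \<Longrightarrow> i \<notin> D \<Longrightarrow> y i = x i \<and> x i \<le> real_of_int k / 2" for i
    unfolding y_def after_fill_def a_def H_def by auto
  have main: "\<exists>A B. A \<subseteq> C \<and> B \<subseteq> C \<and> A \<inter> B = {} \<and> card A = q \<and> card B = q \<and>
        (\<forall>i\<in>A. empty_cups y S i = real_of_int (k + 1) / 2) \<and>
        (\<forall>i\<in>B. empty_cups y S i = real_of_int (k - 1) / 2) \<and>
        (\<forall>i<n. i \<notin> A \<union> B \<longrightarrow> empty_cups y S i = x i)"
    if g: "greedy_choice n y p S" for S
  proof -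
    have Sn: "S \<subseteq> {..<n}" and cS: "card S = p" and gr: "\<And>i j. i \<in> S \<Longrightarrow> j \<in> {..<n} - S \<Longrightarrow> y j \<le> y i"
      using g unfolding greedy_choice_def by auto
    have finS: "finite S" using Sn finite_subset by blast
    have HS: "H \<subseteq> S"
    proof
      fix h assume h: "h \<in> H"
      show "h \<in> S"
      proof (rule ccontr)
        assume hS: "h \<notin> S"
        have hn: "h < n" "x h > real_of_int k / 2" using h unfolding H_def by auto
        have "S \<subseteq> H - {h}"
        proof
          fix i assume i: "i \<in> S"
          have "y h \<le> y i" using gr[OF i] hS hn by auto
          hence "y i > real_of_int k / 2 + 1" using yH[OF h] hn by simp
          moreover have "i \<noteq> h" using i hS by auto
          moreover have "i < n" using i Sn by auto
          moreover have "i \<notin> D" using yD \<open>y i > real_of_int k / 2 + 1\<close> by fastforce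
          moreover have "i \<in> H"
          proof (rule ccontr)
            assume "i \<notin> H"
            thus False using yR[OF \<open>i < n\<close>] \<open>i \<notin> D\<close> \<open>y i > real_of_int k / 2 + 1\<close> by simp
          qed
          ultimately show "i \<in> H - {h}" by simp
        qed
        hence "card S \<le> card (H - {h})" using finH by (simp add: card_mono)
        also have "\<dots> < card H" using h finH by (meson card_Diff1_less)
        finally show False using cS p_def by simp
      qed
    qed
    have SHD: "S \<subseteq> H \<union> D"
    proof
      fix s assume s: "s \<in> S"
      show "s \<in> H \<union> D"
      proof (rule ccontr)
        assume sHD: "s \<notin> H \<union> D"
        have sn: "s < n" using s Sn by auto
        have ys: "y s \<le> real_of_int k / 2" using yR[OF sn] sHD by auto
        have "D \<subseteq> S"
        proof
          fix d assume d: "d \<in> D"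
          show "d \<in> S"
          proof (rule ccontr)
            assume "d \<notin> S"
            hence "y d \<le> y s" using gr[OF s] d Dn by auto
            thus False using yD[OF d] ys by simp
          qed
        qed
        hence "insert s (H \<union> D) \<subseteq> S" using HS s by auto
        hence "card (insert s (H \<union> D)) \<le> card S" using finS card_mono by blast
        moreover have "card (insert s (H \<union> D)) = card H + card D + 1"
          using sHD card_Un_disjoint[OF finH finD HD] finH finD by simp
        ultimately show False using cS p_def cD q_pos by simp
      qed
    qed
    define B where "B = S \<inter> D"
    define A where "A = D - B"
    have SHB: "S = H \<union> B" using HS SHD unfolding B_def by auto
    have HB: "H \<inter> B = {}" using HD unfolding B_def by auto
    have finB: "finite B" using finD unfolding B_def by auto
    have cB: "card B = q" using card_Un_disjoint[OF finH finB HB] SHB cS p_def by simp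
    have "B \<subseteq> D" unfolding B_def by auto
    hence cA: "card A = q" unfolding A_def using card_Diff_subset[OF finB \<open>B \<subseteq> D\<close>] cD cB by simp
    show ?thesis
    proof (intro exI conjI)
      show "A \<subseteq> C" "B \<subseteq> C" using DC unfolding A_def B_def by auto
      show "A \<inter> B = {}" "card A = q" "card B = q" using cA cB unfolding A_def by auto
      show "\<forall>i\<in>A. empty_cups y S i = real_of_int (k + 1) / 2"
        using yD HD SHB HB unfolding A_def B_def empty_cups_def by auto
      show "\<forall>i\<in>B. empty_cups y S i = real_of_int (k - 1) / 2"
        using yD HD SHB unfolding B_def empty_cups_def by auto
      show "\<forall>i<n. i \<notin> A \<union> B \<longrightarrow> empty_cups y S i = x i"
      proof (intro allI impI)
        fix i assume i: "i < n" "i \<notin> A \<union> B"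
        hence iD: "i \<notin> D" unfolding A_def B_def by auto
        show "empty_cups y S i = x i"
        proof (cases "i \<in> H")
          case True
          thus ?thesis using yH[OF True] SHB unfolding empty_cups_def by auto
        next
          case False
          hence "i \<notin> S" using SHB iD unfolding B_def by auto
          thus ?thesis using yR[OF i(1) False iD] unfolding empty_cups_def by auto
        qed
      qed
    qed
  qed
  show ?thesis
    apply (rule exI[of _ p], rule exI[of _ a])
    using valid main unfolding y_def C_def Let_def by blast
qed

end
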